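(* Let $h:H\to K$ be an isomorphism between subgroups of a group $G$, and $\mathcal F\subset\mathcal P_G$ an $h$-invariant left-invariant lower family. If $A\subset H$ and $A\notin\tau^\alpha(\mathcal F)$ for some ordinal $\alpha$, then $h(A)\cup z\,h(A)\notin\tau^{\alpha+1}(\mathcal F)$ for every $z\in G\setminus\{e\}$.
   Context: $\mathcal F$ is $h$-invariant if for every $A\subset H$: $A\in\mathcal F$ iff $h(A)\in\mathcal F$. Left-invariant: $xF\in\mathcal F$ for $F\in\mathcal F$, $x\in G$; lower: closed under subsets. $\tau(\mathcal F)=\{A\subset G: xA\cap yA\in\mathcal F$ for all distinct $x,y\in G\}$, $\tau^0(\mathcal F)=\mathcal F$, $\tau^{<\alpha}(\mathcal F)=\bigcup_{\beta<\alpha}\tau^\beta(\mathcal F)$, $\tau^\alpha(\mathcal F)=\tau(\tau^{<\alpha}(\mathcal F))$ for $\alpha>0$. *)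

theory Defs
  imports "HOL-Algebra.Algebra"
begin

definition tau :: "('a, 'b) monoid_scheme \<Rightarrow> 'a set set \<Rightarrow> 'a set set" where
  "tau G \<F> = {A. A \<subseteq> carrier G \<and>
     (\<forall>x\<in>carrier G. \<forall>y\<in>carrier G. x \<noteq> y \<longrightarrow>
        (x <#\<^bsub>G\<^esub> A) \<inter> (y <#\<^bsub>G\<^esub> A) \<in> \<F>)}"

text \<open>Transfinite iterates tau^alpha, indexed by the elements of a well-ordered type
  (standing for ordinals): tau^alpha(F) = F if alpha is the least element, and
  tau^alpha(F) = tau(Union_{beta<alpha} tau^beta(F)) otherwise.\<close>
definition tau_iter :: "('a, 'b) monoid_scheme \<Rightarrow> 'a set set \<Rightarrow> 'o::wellorder \<Rightarrow> 'a set set" where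
  "tau_iter G \<F> = wfrec {(x, y). x < y}
     (\<lambda>r \<alpha>. if (\<forall>\<beta>. \<not> \<beta> < \<alpha>) then \<F> else tau G (\<Union>\<beta>\<in>{\<beta>. \<beta> < \<alpha>}. r \<beta>))"

definition h_invariant :: "('a \<Rightarrow> 'a) \<Rightarrow> 'a set \<Rightarrow> 'a set set \<Rightarrow> bool" where
  "h_invariant h H \<F> \<longleftrightarrow> (\<forall>A. A \<subseteq> H \<longrightarrow> (A \<in> \<F> \<longleftrightarrow> h ` A \<in> \<F>))"

definition left_invariant :: "('a, 'b) monoid_scheme \<Rightarrow> 'a set set \<Rightarrow> bool" where
  "left_invariant G \<F> \<longleftrightarrow> (\<forall>F\<in>\<F>. \<forall>x\<in>carrier G. x <#\<^bsub>G\<^esub> F \<in> \<F>)"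

definition lower_family :: "'a set set \<Rightarrow> bool" where
  "lower_family \<F> \<longleftrightarrow> (\<forall>A\<in>\<F>. \<forall>B. B \<subseteq> A \<longrightarrow> B \<in> \<F>)"

definition is_succ :: "'o::wellorder \<Rightarrow> 'o \<Rightarrow> bool" where
  "is_succ \<alpha> \<beta> \<longleftrightarrow> \<alpha> < \<beta> \<and> (\<forall>\<gamma>. \<alpha> < \<gamma> \<longrightarrow> \<beta> \<le> \<gamma>)"

end

theory Submission
  imports Defs
begin

lemma tau_iter_eq:
  "tau_iter G F a = (if (\<forall>b. \<not> b < a) then F else tau G (\<Union>b\<in>{b. b < a}. tau_iter G F b))"
proof -
  have "tau_iter G F = (\<lambda>r \<alpha>. if (\<forall>\<beta>. \<not> \<beta> < \<alpha>) then F else tau G (\<Union>\<beta>\<in>{\<beta>. \<beta> < \<alpha>}. r \<beta>)) (tau_iter G F)"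
    unfolding tau_iter_def
    by (rule wfrec_fixpoint[OF wf]) (auto simp: adm_wf_def intro!: arg_cong[where f="tau G"])
  from fun_cong[OF this, of a] show ?thesis by simp
qed

definition PP where
  "PP G h H L \<longleftrightarrow> L \<subseteq> Pow (carrier G) \<and> lower_family L \<and> left_invariant G L
     \<and> (\<forall>S. S \<subseteq> H \<longrightarrow> h ` S \<in> L \<longrightarrow> S \<in> L)"

lemma mem_lcos: "y \<in> (x <#\<^bsub>G\<^esub> S) \<longleftrightarrow> (\<exists>s\<in>S. y = x \<otimes>\<^bsub>G\<^esub> s)"
  by (auto simp: l_coset_def)

lemma lcos_mono: "B \<subseteq> A \<Longrightarrow> (x <#\<^bsub>G\<^esub> B) \<subseteq> (x <#\<^bsub>G\<^esub> A)"
  by (auto simp: l_coset_def)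

lemma PP_Union: "(\<And>L. L \<in> M \<Longrightarrow> PP G h H L) \<Longrightarrow> PP G h H (\<Union>M)"
  unfolding PP_def lower_family_def left_invariant_def by blast

lemma PP_sub_tau:
  assumes "group G" "PP G h H L" shows "L \<subseteq> tau G L"
proof
  fix A assume A: "A \<in> L"
  have Ac: "A \<subseteq> carrier G" using assms(2) A unfolding PP_def by blast
  show "A \<in> tau G L" unfolding tau_def
  proof (intro CollectI conjI Ac ballI impI)
    fix x y assume "x \<in> carrier G" "y \<in> carrier G" "x \<noteq> y"
    then have "(x <#\<^bsub>G\<^esub> A) \<in> L" using assms(2) A unfolding PP_def left_invariant_def by blast
    then show "(x <#\<^bsub>G\<^esub> A) \<inter> (y <#\<^bsub>G\<^esub> A) \<in> L"
      using assms(2) unfolding PP_def lower_family_def by blast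
  qed
qed

lemma (in group) PP_tau:
  assumes HG: "subgroup H G" and KG: "subgroup K G"
    and hiso: "h \<in> iso (G\<lparr>carrier := H\<rparr>) (G\<lparr>carrier := K\<rparr>)"
    and P: "PP G h H L" and nz: "z \<in> carrier G" "z \<noteq> \<one>\<^bsub>G\<^esub>"
  shows "PP G h H (tau G L)"
proof -
  have LP: "L \<subseteq> Pow (carrier G)" and low: "lower_family L" and li: "left_invariant G L"
    and hi: "\<And>S. S \<subseteq> H \<Longrightarrow> h ` S \<in> L \<Longrightarrow> S \<in> L" using P unfolding PP_def by auto
  have Hc: "H \<subseteq> carrier G" "K \<subseteq> carrier G" using HG KG subgroup.subset by auto
  have hH: "\<And>x. x \<in> H \<Longrightarrow> h x \<in> K" and hm: "\<And>x y. x \<in> H \<Longrightarrow> y \<in> H \<Longrightarrow> h (x \<otimes> y) = h x \<otimes> h y"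
    and hinj: "inj_on h H"
    using hiso unfolding iso_def hom_def bij_betw_def by auto
  have h1: "h \<one> = \<one>"
  proof -
    have o: "\<one> \<in> H" using HG subgroup.one_closed by fastforce
    have "h \<one> = h \<one> \<otimes> h \<one>" using hm[OF o o] by simp
    moreover have "h \<one> \<in> carrier G" using hH[OF o] Hc by auto
    ultimately show ?thesis using l_cancel_one'[of "h \<one>" "h \<one>"] by simp
  qed
  have low2: "lower_family (tau G L)"
    unfolding lower_family_def tau_def
  proof (clarsimp)
    fix A B assume Ac: "A \<subseteq> carrier G" and AL: "\<forall>x\<in>carrier G. \<forall>y\<in>carrier G. x \<noteq> y \<longrightarrow> (x <# A) \<inter> (y <# A) \<in> L"
      and BA: "B \<subseteq> A"
    show "B \<subseteq> carrier G \<and> (\<forall>x\<in>carrier G. \<forall>y\<in>carrier G. x \<noteq> y \<longrightarrow> (x <# B) \<inter> (y <# B) \<in> L)"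
    proof (intro conjI ballI impI)
      show "B \<subseteq> carrier G" using BA Ac by auto
      fix x y assume xy: "x \<in> carrier G" "y \<in> carrier G" "x \<noteq> y"
      have "(x <# B) \<inter> (y <# B) \<subseteq> (x <# A) \<inter> (y <# A)" using lcos_mono[OF BA] by blast
      thus "(x <# B) \<inter> (y <# B) \<in> L" using AL xy low unfolding lower_family_def by blast
    qed
  qed
  have li2: "left_invariant G (tau G L)"
    unfolding left_invariant_def tau_def
  proof (clarsimp)
    fix A g assume Ac: "A \<subseteq> carrier G" and AL: "\<forall>x\<in>carrier G. \<forall>y\<in>carrier G. x \<noteq> y \<longrightarrow> (x <# A) \<inter> (y <# A) \<in> L"
      and g: "g \<in> carrier G"
    show "(g <# A) \<subseteq> carrier G \<and> (\<forall>x\<in>carrier G. \<forall>y\<in>carrier G. x \<noteq> y \<longrightarrow> (x <# (g <# A)) \<inter> (y <# (g <# A)) \<in> L)"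
    proof (intro conjI ballI impI)
      show "(g <# A) \<subseteq> carrier G" using Ac g by (auto simp: mem_lcos intro!: m_closed)
      fix x y assume xy: "x \<in> carrier G" "y \<in> carrier G" "x \<noteq> y"
      have "x \<otimes> g \<noteq> y \<otimes> g" using xy g by simp
      hence "((x \<otimes> g) <# A) \<inter> ((y \<otimes> g) <# A) \<in> L" using AL xy g by auto
      thus "(x <# (g <# A)) \<inter> (y <# (g <# A)) \<in> L" using xy g Ac by (simp add: lcos_m_assoc)
    qed
  qed
  have hi2: "S \<in> tau G L" if S: "S \<subseteq> H" and hS: "h ` S \<in> tau G L" for S
  proof -
    have Sc: "S \<subseteq> carrier G" using S Hc by auto
    have hSc: "h ` S \<subseteq> carrier G" using S hH Hc by blast
    have hSL: "\<And>x y. x \<in> carrier G \<Longrightarrow> y \<in> carrier G \<Longrightarrow> x \<noteq> y \<Longrightarrow> (x <# h ` S) \<inter> (y <# h ` S) \<in> L"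
      using hS unfolding tau_def by auto
    show ?thesis unfolding tau_def
    proof (intro CollectI conjI Sc ballI impI)
      fix x y assume x: "x \<in> carrier G" and y: "y \<in> carrier G" and xy: "x \<noteq> y"
      define g where "g = inv x \<otimes> y"
      have gc: "g \<in> carrier G" using x y g_def by simp
      have yg: "y = x \<otimes> g" using x y g_def by (simp add: m_assoc[symmetric])
      have g1: "g \<noteq> \<one>" using yg xy x by auto
      have eq: "(x <# S) \<inter> (y <# S) = (x <# (S \<inter> (g <# S)))"
      proof
        show "(x <# S) \<inter> (y <# S) \<subseteq> (x <# (S \<inter> (g <# S)))"
        proof
          fix t assume "t \<in> (x <# S) \<inter> (y <# S)"
          then obtain s s' where s: "s \<in> S" "s' \<in> S" "t = x \<otimes> s" "t = y \<otimes> s'" by (auto simp: mem_lcos)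
          hence "x \<otimes> s = x \<otimes> (g \<otimes> s')" using yg x gc Sc subsetD[OF Sc s(2)] by (simp add: m_assoc)
          hence sg: "s = g \<otimes> s'" using x gc subsetD[OF Sc s(1)] subsetD[OF Sc s(2)] by simp
          have "s \<in> S \<inter> (g <# S)" using sg s by (auto simp: mem_lcos)
          thus "t \<in> (x <# (S \<inter> (g <# S)))" using s(3) by (subst mem_lcos) blast
        qed
        show "(x <# (S \<inter> (g <# S))) \<subseteq> (x <# S) \<inter> (y <# S)"
        proof
          fix t assume "t \<in> (x <# (S \<inter> (g <# S)))"
          then obtain s s' where s: "s \<in> S" "s' \<in> S" "s = g \<otimes> s'" "t = x \<otimes> s"
            by (auto simp: mem_lcos)
          have "t = y \<otimes> s'" using s yg x gc subsetD[OF Sc s(2)] by (simp add: m_assoc)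
          moreover have "t \<in> (x <# S)" using s(1,4) by (subst mem_lcos) blast
          moreover have "t \<in> (y <# S)" using s(2) calculation(1) by (subst mem_lcos) blast
          ultimately show "t \<in> (x <# S) \<inter> (y <# S)" by blast
        qed
      qed
      have SH: "S \<inter> (g <# S) \<subseteq> H" using S by auto
      have "S \<inter> (g <# S) \<in> L"
      proof (cases "g \<in> H")
        case False
        have "S \<inter> (g <# S) = {}"
        proof (rule ccontr)
          assume "S \<inter> (g <# S) \<noteq> {}"
          then obtain s where "s \<in> S" "s \<in> (g <# S)" by blast
          then obtain s' where s: "s \<in> S" "s' \<in> S" "s = g \<otimes> s'" unfolding mem_lcos by blast
          hence "g = s \<otimes> inv s'" using gc subsetD[OF Sc s(2)] by (simp add: m_assoc)
          moreover have "inv s' \<in> H" using subgroup.m_inv_closed[OF HG] S s(2) by blast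
          moreover have "s \<in> H" using S s(1) by blast
          ultimately have "g \<in> H" using subgroup.m_closed[OF HG] by simp
          thus False using False by simp
        qed
        moreover have "(\<one> <# h ` S) \<inter> (z <# h ` S) \<in> L" using hSL[OF one_closed nz(1)] nz(2) by simp
        ultimately show ?thesis using low unfolding lower_family_def by blast
      next
        case True
        have hg: "h g \<in> carrier G" "h g \<noteq> \<one>"
        proof -
          show "h g \<in> carrier G" using hH[OF True] Hc by blast
          have o: "\<one> \<in> H" using HG subgroup.one_closed by fastforce
          show "h g \<noteq> \<one>"
          proof
            assume "h g = \<one>"
            hence "h g = h \<one>" using h1 by simp
            hence "g = \<one>" using inj_onD[OF hinj _ True o] by simp
            thus False using g1 by simp
          qed
        qed
        have "h ` (S \<inter> (g <# S)) = h ` S \<inter> (h g <# h ` S)"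
        proof
          show "h ` (S \<inter> (g <# S)) \<subseteq> h ` S \<inter> (h g <# h ` S)"
          proof
            fix t assume "t \<in> h ` (S \<inter> (g <# S))"
            then obtain s where s: "s \<in> S" "s \<in> (g <# S)" "t = h s" by blast
            then obtain s' where s': "s' \<in> S" "s = g \<otimes> s'" unfolding mem_lcos by blast
            have "h s = h g \<otimes> h s'" using s' hm[OF True] S by blast
            hence "t \<in> (h g <# h ` S)" using s' s(3) by (subst mem_lcos) blast
            thus "t \<in> h ` S \<inter> (h g <# h ` S)" using s by blast
          qed
          show "h ` S \<inter> (h g <# h ` S) \<subseteq> h ` (S \<inter> (g <# S))"
          proof
            fix t assume t: "t \<in> h ` S \<inter> (h g <# h ` S)"
            then obtain s where s: "s \<in> S" "t = h s" by blast
            from t have "t \<in> (h g <# h ` S)" by blast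
            then obtain u where u: "u \<in> h ` S" "t = h g \<otimes> u" unfolding mem_lcos by blast
            then obtain s' where s': "s' \<in> S" "u = h s'" by blast
            have sH: "s' \<in> H" "s \<in> H" using s s' S by auto
            have "h (g \<otimes> s') = h g \<otimes> h s'" using hm[OF True sH(1)] .
            hence "h s = h (g \<otimes> s')" using s u s' by simp
            moreover have "g \<otimes> s' \<in> H" using subgroup.m_closed[OF HG True sH(1)] .
            ultimately have sg: "s = g \<otimes> s'" using inj_onD[OF hinj _ sH(2)] by blast
            have "s \<in> (g <# S)" using sg s' by (subst mem_lcos) blast
            thus "t \<in> h ` (S \<inter> (g <# S))" using s by blast
          qed
        qed
        moreover have "(\<one> <# h ` S) \<inter> (h g <# h ` S) \<in> L" using hSL[OF one_closed hg(1)] hg(2) by simp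
        moreover have "(\<one> <# h ` S) = h ` S" using hSc by (simp add: lcos_mult_one)
        ultimately have "h ` (S \<inter> (g <# S)) \<in> L" by simp
        thus ?thesis using hi[OF SH] by blast
      qed
      hence "(x <# (S \<inter> (g <# S))) \<in> L" using li x unfolding left_invariant_def by blast
      thus "(x <# S) \<inter> (y <# S) \<in> L" using eq by simp
    qed
  qed
  have "tau G L \<subseteq> Pow (carrier G)" unfolding tau_def by blast
  thus ?thesis unfolding PP_def using low2 li2 hi2 by blast
qed

lemma (in group) PP_all:
  assumes HG: "subgroup H G" and KG: "subgroup K G"
    and hiso: "h \<in> iso (G\<lparr>carrier := H\<rparr>) (G\<lparr>carrier := K\<rparr>)"
    and P0: "PP G h H F" and nz: "z \<in> carrier G" "z \<noteq> \<one>"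
  shows "PP G h H (tau_iter G F (\<gamma>::'o::wellorder))"
proof (induction \<gamma> rule: less_induct)
  case (less a)
  show ?case
  proof (cases "\<forall>b. \<not> b < a")
    case True
    then show ?thesis using P0 by (subst tau_iter_eq) simp
  next
    case False
    have "PP G h H (\<Union>b\<in>{b. b < a}. tau_iter G F b)"
      by (rule PP_Union) (use less in auto)
    hence "PP G h H (tau G (\<Union>b\<in>{b. b < a}. tau_iter G F b))"
      by (rule PP_tau[OF HG KG hiso _ nz])
    then show ?thesis using False by (subst tau_iter_eq) auto
  qed
qed

lemma (in group) main_aux:
  fixes \<alpha> \<beta> :: "'o::wellorder"
  assumes HG: "subgroup H G" and KG: "subgroup K G"
    and hiso: "h \<in> iso (G\<lparr>carrier := H\<rparr>) (G\<lparr>carrier := K\<rparr>)"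
    and FP: "F \<subseteq> Pow (carrier G)"
    and hinv: "h_invariant h H F" and li: "left_invariant G F" and low: "lower_family F"
    and AH: "A \<subseteq> H" and An: "A \<notin> tau_iter G F \<alpha>"
    and suc: "is_succ \<alpha> \<beta>"
    and nz: "z \<in> carrier G" "z \<noteq> \<one>"
  shows "h ` A \<union> (z <# (h ` A)) \<notin> tau_iter G F \<beta>"
proof
  have P0: "PP G h H F" using FP hinv li low unfolding PP_def h_invariant_def by blast
  have PA: "\<And>\<gamma>::'o. PP G h H (tau_iter G F \<gamma>)" by (rule PP_all[OF HG KG hiso P0 nz])
  have PU: "\<And>d::'o. PP G h H (\<Union>b\<in>{b. b < d}. tau_iter G F b)"
    by (rule PP_Union) (use PA in auto)
  have mono: "tau_iter G F g \<subseteq> tau_iter G F d" if "g < d" for g d :: 'o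
  proof -
    have "tau_iter G F d = tau G (\<Union>b\<in>{b. b < d}. tau_iter G F b)"
      using that by (subst tau_iter_eq) auto
    moreover have "(\<Union>b\<in>{b. b < d}. tau_iter G F b) \<subseteq> tau G (\<Union>b\<in>{b. b < d}. tau_iter G F b)"
      by (rule PP_sub_tau[OF is_group PU])
    ultimately show ?thesis using that by blast
  qed
  have ab: "\<alpha> < \<beta>" using suc unfolding is_succ_def by simp
  define U where "U = (\<Union>b\<in>{b. b < \<beta>}. tau_iter G F b)"
  have Ueq: "tau_iter G F \<beta> = tau G U" unfolding U_def using ab by (subst tau_iter_eq) auto
  have hAc: "h ` A \<subseteq> carrier G"
    using hiso AH subgroup.subset[OF KG] unfolding iso_def hom_def by auto
  define B where "B = h ` A \<union> (z <# (h ` A))"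
  have zc: "(z <# (h ` A)) \<subseteq> carrier G" using hAc nz by (auto simp: mem_lcos image_subset_iff intro!: m_closed)
  have Bc: "B \<subseteq> carrier G" using hAc zc unfolding B_def by blast
  assume "h ` A \<union> (z <# (h ` A)) \<in> tau_iter G F \<beta>"
  hence "B \<in> tau G U" using Ueq B_def by simp
  hence "(\<one> <# B) \<inter> (z <# B) \<in> U" unfolding tau_def using nz by auto
  moreover have "(\<one> <# B) = B" using Bc by (simp add: lcos_mult_one)
  moreover have "(z <# (h ` A)) \<subseteq> B \<inter> (z <# B)"
    using lcos_mono[of "h ` A" B G z] unfolding B_def by blast
  ultimately have "(z <# (h ` A)) \<in> U"
    using PU[of \<beta>] unfolding U_def PP_def lower_family_def by (metis (no_types, lifting))
  then obtain g where g: "g < \<beta>" "(z <# (h ` A)) \<in> tau_iter G F g" unfolding U_def by blast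
  have "g \<le> \<alpha>" using g(1) suc unfolding is_succ_def by (meson not_le)
  hence "(z <# (h ` A)) \<in> tau_iter G F \<alpha>" using g(2) mono[of g \<alpha>] by (cases "g = \<alpha>") (auto simp: order_le_less)
  hence "(inv z <# (z <# (h ` A))) \<in> tau_iter G F \<alpha>"
    using PA[of \<alpha>] nz unfolding PP_def left_invariant_def by simp
  moreover have "(inv z <# (z <# (h ` A))) = h ` A"
    using nz hAc by (simp add: lcos_m_assoc lcos_mult_one)
  ultimately have "h ` A \<in> tau_iter G F \<alpha>" by simp
  hence "A \<in> tau_iter G F \<alpha>" using PA[of \<alpha>] AH unfolding PP_def by blast
  thus False using An by simp
qed

theorem lemma6p2:
  fixes G :: "('a, 'b) monoid_scheme" and h :: "'a \<Rightarrow> 'a"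
    and H K A :: "'a set" and \<F> :: "'a set set" and \<alpha> \<beta> :: "'o::wellorder" and z :: 'a
  assumes "group G"
    and "subgroup H G" and "subgroup K G"
    and "h \<in> iso (G\<lparr>carrier := H\<rparr>) (G\<lparr>carrier := K\<rparr>)"
    and "\<F> \<subseteq> Pow (carrier G)"
    and "h_invariant h H \<F>" and "left_invariant G \<F>" and "lower_family \<F>"
    and "A \<subseteq> H" and "A \<notin> tau_iter G \<F> \<alpha>"
    and "is_succ \<alpha> \<beta>"
    and "z \<in> carrier G" and "z \<noteq> \<one>\<^bsub>G\<^esub>"
  shows "h ` A \<union> (z <#\<^bsub>G\<^esub> (h ` A)) \<notin> tau_iter G \<F> \<beta>"
  by (rule group.main_aux[OF assms])

end
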